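(* Let $\Gamma=([n],E)$ be a simple graph, $k\ge1$ an integer, and $\mathsf{P}$ an $\mathcal{H}$-poset of the hypergraph $\mathsf{H}_k(\Gamma)$ which is not an $\mathcal{H}$-poset of $\mathsf{H}_{k+1}(\Gamma)$. Then there is an $\mathcal{H}$-poset $\mathsf{P}'$ of $\mathsf{H}_{k+1}(\Gamma)$ obtained from $\mathsf{P}$ by adding relations, i.e. $i<_{\mathsf{P}}j$ implies $i<_{\mathsf{P}'}j$ for all $i,j\in[n]$.
   Context: $\mathsf{H}_m(\Gamma)=\{S\subseteq[n]:S\neq\emptyset,\ |S|\le m+1,\ \Gamma|_S\text{ connected}\}$. A poset $\mathsf{P}$ on $[n]$ is an $\mathcal{H}$-poset of a hypergraph $\mathsf{H}$ (a set of nonempty subsets of $[n]$) if (1) for every $H\in\mathsf{H}$ the Hasse diagram of the induced subposet $\mathsf{P}|_H$ is a rooted tree (as an undirected graph it is a tree, and $\mathsf{P}|_H$ has a unique maximal element); and (2) whenever $i\lessdot_{\mathsf{P}}j$ ($i<_{\mathsf{P}}j$ with no $k$ strictly between), there exists $H\in\mathsf{H}$ with $\{i,j\}\subseteq H$. *)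

theory Defs
  imports Main
begin

definition graph_connected :: "nat set \<Rightarrow> (nat \<times> nat) set \<Rightarrow> bool" where
  "graph_connected V Ed \<longleftrightarrow>
     (\<forall>x\<in>V. \<forall>y\<in>V. (x, y) \<in> (Ed \<inter> (V \<times> V))\<^sup>*)"

definition simple_graph :: "nat \<Rightarrow> (nat \<times> nat) set \<Rightarrow> bool" where
  "simple_graph n E \<longleftrightarrow> E \<subseteq> {1..n} \<times> {1..n} \<and> sym E \<and> (\<forall>x. (x, x) \<notin> E)"

definition Hyp :: "nat \<Rightarrow> (nat \<times> nat) set \<Rightarrow> nat \<Rightarrow> nat set set" where
  "Hyp n E m = {S. S \<subseteq> {1..n} \<and> S \<noteq> {} \<and> card S \<le> m + 1 \<and> graph_connected S E}"

definition pless :: "(nat \<times> nat) set \<Rightarrow> nat \<Rightarrow> nat \<Rightarrow> bool" where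
  "pless r i j \<longleftrightarrow> (i, j) \<in> r \<and> i \<noteq> j"

definition pcovers :: "(nat \<times> nat) set \<Rightarrow> nat \<Rightarrow> nat \<Rightarrow> bool" where
  "pcovers r i j \<longleftrightarrow> pless r i j \<and> \<not> (\<exists>k. pless r i k \<and> pless r k j)"

text \<open>Tree: connected, and every edge is a bridge (undirected graph, acyclic).\<close>
definition is_tree :: "nat set \<Rightarrow> (nat \<times> nat) set \<Rightarrow> bool" where
  "is_tree V Ed \<longleftrightarrow> graph_connected V Ed \<and>
     (\<forall>a b. (a, b) \<in> Ed \<inter> (V \<times> V) \<longrightarrow>
        (a, b) \<notin> ((Ed - {(a, b), (b, a)}) \<inter> (V \<times> V))\<^sup>*)"

definition hasse_graph :: "(nat \<times> nat) set \<Rightarrow> (nat \<times> nat) set" where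
  "hasse_graph r = {(a, b). pcovers r a b \<or> pcovers r b a}"

definition rooted_tree_on :: "(nat \<times> nat) set \<Rightarrow> nat set \<Rightarrow> bool" where
  "rooted_tree_on r H \<longleftrightarrow>
     (let rH = r \<inter> (H \<times> H) in
        is_tree H (hasse_graph rH) \<and>
        (\<exists>!x. x \<in> H \<and> \<not> (\<exists>y\<in>H. pless rH x y)))"

definition H_poset :: "nat \<Rightarrow> nat set set \<Rightarrow> (nat \<times> nat) set \<Rightarrow> bool" where
  "H_poset n HH P \<longleftrightarrow> partial_order_on {1..n} P \<and>
     (\<forall>H\<in>HH. rooted_tree_on P H) \<and>
     (\<forall>i j. pcovers P i j \<longrightarrow> (\<exists>H\<in>HH. {i, j} \<subseteq> H))"

end

theory Submission
  imports Defs
begin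

lemma hasse_sym: "(a, b) \<in> hasse_graph r \<longleftrightarrow> (b, a) \<in> hasse_graph r"
  unfolding hasse_graph_def by auto

lemma interval_conn:
  assumes tr: "trans Q" and anti: "antisym Q" and fin: "finite H" and rfl: "\<forall>y\<in>H. (y,y) \<in> Q"
  shows "\<forall>x y. card {z\<in>H. (x,z)\<in>Q \<and> (z,y)\<in>Q} = m \<longrightarrow> x \<in> H \<longrightarrow> y \<in> H \<longrightarrow> (x,y) \<in> Q
     \<longrightarrow> (x, y) \<in> (hasse_graph (Q \<inter> H \<times> H) \<inter> (H \<times> H))\<^sup>*"
proof (induction m rule: less_induct)
  case (less m)
  show ?case
  proof (intro allI impI)
    fix x y assume c: "card {z\<in>H. (x,z)\<in>Q \<and> (z,y)\<in>Q} = m" and xH: "x \<in> H" and yH: "y \<in> H"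
      and xy: "(x,y) \<in> Q"
    let ?r = "Q \<inter> H \<times> H"
    show "(x, y) \<in> (hasse_graph ?r \<inter> (H \<times> H))\<^sup>*"
    proof (cases "x = y")
      case True then show ?thesis by simp
    next
      case False
      show ?thesis
      proof (cases "pcovers ?r x y")
        case True
        then have "(x,y) \<in> hasse_graph ?r \<inter> (H \<times> H)" using xH yH unfolding hasse_graph_def by auto
        then show ?thesis by blast
      next
        case nc: False
        have "pless ?r x y" using False xy xH yH unfolding pless_def by auto
        with nc obtain z where xz: "pless ?r x z" and zy: "pless ?r z y" unfolding pcovers_def by blast
        have zH: "z \<in> H" and xzQ: "(x,z) \<in> Q" and zyQ: "(z,y) \<in> Q" and xz': "x \<noteq> z" and zy': "z \<noteq> y"
          using xz zy unfolding pless_def by auto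
        let ?I = "\<lambda>u v. {w\<in>H. (u,w)\<in>Q \<and> (w,v)\<in>Q}"
        have s1: "?I x z \<subset> ?I x y"
        proof
          show "?I x z \<subseteq> ?I x y" using zyQ tr by (auto dest: transD)
          have "y \<in> ?I x y" using yH xy zy' rfl by auto
          moreover have "y \<notin> ?I x z" using zyQ zy' anti by (auto dest: antisymD)
          ultimately show "?I x z \<noteq> ?I x y" by blast
        qed
        have s2: "?I z y \<subset> ?I x y"
        proof
          show "?I z y \<subseteq> ?I x y" using xzQ tr by (auto dest: transD)
          have "x \<in> ?I x y" using xH xy xz' rfl by auto
          moreover have "x \<notin> ?I z y" using xzQ xz' anti by (auto dest: antisymD)
          ultimately show "?I z y \<noteq> ?I x y" by blast
        qed
        have f: "finite (?I x y)" using fin by auto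
        have "card (?I x z) < m" using psubset_card_mono[OF f s1] c by simp
        moreover have "card (?I z y) < m" using psubset_card_mono[OF f s2] c by simp
        ultimately have "(x, z) \<in> (hasse_graph ?r \<inter> (H \<times> H))\<^sup>*" "(z, y) \<in> (hasse_graph ?r \<inter> (H \<times> H))\<^sup>*"
          using less xH zH yH xzQ zyQ by blast+
        then show ?thesis by (meson rtrancl_trans)
      qed
    qed
  qed
qed

lemma chain_rooted:
  assumes po: "partial_order_on A Q" and HA: "H \<subseteq> A" and fin: "finite H" and ne: "H \<noteq> {}"
    and tot: "\<forall>a\<in>H. \<forall>b\<in>H. (a,b)\<in>Q \<or> (b,a)\<in>Q"
  shows "rooted_tree_on Q H"
proof -
  have tr: "trans Q" and anti: "antisym Q" and rf: "refl_on A Q"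
    using po unfolding partial_order_on_def preorder_on_def by auto
  define r where "r = Q \<inter> H \<times> H"
  have pl: "pless r x y \<longleftrightarrow> (x,y)\<in>Q \<and> x\<in>H \<and> y\<in>H \<and> x\<noteq>y" for x y
    unfolding pless_def r_def by auto
  have rfl: "\<forall>y\<in>H. (y,y)\<in>Q" using rf HA unfolding refl_on_def by auto
  have conn1: "(x, y) \<in> (hasse_graph r \<inter> (H \<times> H))\<^sup>*" if "x \<in> H" "y \<in> H" "(x,y)\<in>Q" for x y
    using interval_conn[OF tr anti fin rfl] that unfolding r_def by blast
  have symG: "sym (hasse_graph r \<inter> (H \<times> H))"
    unfolding sym_def using hasse_sym by blast
  have conn: "graph_connected H (hasse_graph r)"
    unfolding graph_connected_def
  proof (intro ballI)
    fix x y assume x: "x \<in> H" and y: "y \<in> H"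
    show "(x, y) \<in> (hasse_graph r \<inter> H \<times> H)\<^sup>*"
    proof (cases "(x,y) \<in> Q")
      case True then show ?thesis using conn1 x y by blast
    next
      case False
      then have "(y,x) \<in> Q" using tot x y by blast
      then have "(y, x) \<in> (hasse_graph r \<inter> (H \<times> H))\<^sup>*" using conn1 x y by blast
      then have "(x, y) \<in> ((hasse_graph r \<inter> (H \<times> H))\<inverse>)\<^sup>*" by (simp add: rtrancl_converse)
      then show ?thesis using symG by (simp add: sym_conv_converse_eq)
    qed
  qed
  have bridge1: "(a, b) \<notin> ((hasse_graph r - {(a, b), (b, a)}) \<inter> (H \<times> H))\<^sup>*"
    if cab: "pcovers r a b" for a b
  proof
    assume path: "(a, b) \<in> ((hasse_graph r - {(a, b), (b, a)}) \<inter> (H \<times> H))\<^sup>*"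
    have ab: "(a,b) \<in> Q" "a \<in> H" "b \<in> H" "a \<noteq> b" using cab pl unfolding pcovers_def by auto
    have stp: "(v,a) \<in> Q" if "(u,a) \<in> Q" "(u,v) \<in> (hasse_graph r - {(a, b), (b, a)}) \<inter> (H \<times> H)" for u v
    proof -
      have uv: "u \<in> H" "v \<in> H" "(u,v) \<noteq> (a,b)" "(u,v) \<noteq> (b,a)" "pcovers r u v \<or> pcovers r v u"
        using that(2) unfolding hasse_graph_def by auto
      show ?thesis
      proof (cases "pcovers r v u")
        case True
        then have "(v,u) \<in> Q" unfolding pcovers_def pl by auto
        then show ?thesis using that(1) tr by (auto dest: transD)
      next
        case False
        then have cuv: "pcovers r u v" using uv by blast
        then have uvQ: "(u,v) \<in> Q" "u \<noteq> v" unfolding pcovers_def pl by auto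
        show ?thesis
        proof (rule ccontr)
          assume nva: "(v,a) \<notin> Q"
          then have avQ: "(a,v) \<in> Q" using tot uv ab by blast
          have "a \<noteq> v" using nva rf ab HA unfolding refl_on_def by auto
          have ua: "u = a"
          proof (rule ccontr)
            assume "u \<noteq> a"
            then have "pless r u a" "pless r a v" using pl that(1) uv ab avQ \<open>a \<noteq> v\<close> by auto
            then show False using cuv unfolding pcovers_def by blast
          qed
          have "v \<noteq> b" using uv ua by auto
          show False
          proof (cases "(v,b) \<in> Q")
            case True
            then have "pless r a v" "pless r v b" using pl uv ab avQ \<open>a \<noteq> v\<close> \<open>v \<noteq> b\<close> by auto
            then show False using cab unfolding pcovers_def by blast
          next
            case False
            then have "(b,v) \<in> Q" using tot uv ab by blast
            then have "pless r a b" "pless r b v" using pl uv ab \<open>v \<noteq> b\<close> by auto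
            then show False using cuv ua unfolding pcovers_def by blast
          qed
        qed
      qed
    qed
    have "(a,a) \<in> Q" using rf ab HA unfolding refl_on_def by auto
    have "\<forall>y. (a, y) \<in> ((hasse_graph r - {(a, b), (b, a)}) \<inter> (H \<times> H))\<^sup>* \<longrightarrow> (y,a) \<in> Q"
    proof (intro allI impI)
      fix y assume "(a, y) \<in> ((hasse_graph r - {(a, b), (b, a)}) \<inter> (H \<times> H))\<^sup>*"
      then show "(y,a) \<in> Q"
      proof (induction rule: rtrancl_induct)
        case base then show ?case using \<open>(a,a) \<in> Q\<close> .
      next
        case (step y z) then show ?case using stp by blast
      qed
    qed
    then have "(b,a) \<in> Q" using path by blast
    then show False using ab anti by (auto dest: antisymD)
  qed
  have bridge: "\<forall>a b. (a, b) \<in> hasse_graph r \<inter> (H \<times> H) \<longrightarrow>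
        (a, b) \<notin> ((hasse_graph r - {(a, b), (b, a)}) \<inter> (H \<times> H))\<^sup>*"
  proof (intro allI impI)
    fix a b assume "(a, b) \<in> hasse_graph r \<inter> (H \<times> H)"
    then have "pcovers r a b \<or> pcovers r b a" unfolding hasse_graph_def by auto
    then show "(a, b) \<notin> ((hasse_graph r - {(a, b), (b, a)}) \<inter> (H \<times> H))\<^sup>*"
    proof
      assume "pcovers r a b" then show ?thesis using bridge1 by blast
    next
      assume "pcovers r b a"
      then have nb: "(b, a) \<notin> ((hasse_graph r - {(b, a), (a, b)}) \<inter> (H \<times> H))\<^sup>*" using bridge1 by blast
      have sy: "sym ((hasse_graph r - {(b, a), (a, b)}) \<inter> (H \<times> H))"
        unfolding sym_def using hasse_sym by blast
      show ?thesis
      proof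
        assume "(a, b) \<in> ((hasse_graph r - {(a, b), (b, a)}) \<inter> (H \<times> H))\<^sup>*"
        then have "(a, b) \<in> ((hasse_graph r - {(b, a), (a, b)}) \<inter> (H \<times> H))\<^sup>*"
          by (simp add: insert_commute)
        then have "(b, a) \<in> (((hasse_graph r - {(b, a), (a, b)}) \<inter> (H \<times> H))\<inverse>)\<^sup>*"
          by (simp add: rtrancl_converse)
        then show False using nb sy by (simp add: sym_conv_converse_eq)
      qed
    qed
  qed
  define D where "D x = {y\<in>H. (y,x)\<in>Q}" for x
  obtain m where mH: "m \<in> H" and mmax: "\<forall>y\<in>H. card (D y) \<le> card (D m)"
  proof -
    let ?M = "Max ((\<lambda>x. card (D x)) ` H)"
    have f: "finite ((\<lambda>x. card (D x)) ` H)" using fin by simp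
    have "?M \<in> (\<lambda>x. card (D x)) ` H" using f ne by (intro Max_in) auto
    then obtain m where "m \<in> H" "card (D m) = ?M" by auto
    moreover have "\<forall>y\<in>H. card (D y) \<le> ?M" using f by auto
    ultimately show ?thesis using that by metis
  qed
  have mx: "\<not> (\<exists>y\<in>H. pless r m y)"
  proof
    assume "\<exists>y\<in>H. pless r m y"
    then obtain y where y: "y \<in> H" "(m,y) \<in> Q" "m \<noteq> y" using pl by auto
    have "D m \<subset> D y"
    proof
      show "D m \<subseteq> D y" unfolding D_def using y tr by (auto dest: transD)
      have "m \<in> D y" unfolding D_def using y mH by auto
      moreover have "y \<notin> D m" unfolding D_def using y anti by (auto dest: antisymD)
      moreover have "y \<in> D y" unfolding D_def using y rf HA unfolding refl_on_def by auto
      ultimately show "D m \<noteq> D y" by blast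
    qed
    then have "card (D m) < card (D y)" using fin unfolding D_def by (intro psubset_card_mono) auto
    then show False using mmax y by force
  qed
  have uniq: "\<exists>!x. x \<in> H \<and> \<not> (\<exists>y\<in>H. pless r x y)"
  proof (rule ex1I[of _ m])
    show "m \<in> H \<and> \<not> (\<exists>y\<in>H. pless r m y)" using mH mx by blast
  next
    fix x assume x: "x \<in> H \<and> \<not> (\<exists>y\<in>H. pless r x y)"
    show "x = m"
    proof (rule ccontr)
      assume "x \<noteq> m"
      then have "pless r x m \<or> pless r m x" using tot x mH pl by blast
      then show False using x mx mH by blast
    qed
  qed
  show ?thesis unfolding rooted_tree_on_def Let_def is_tree_def
    using conn bridge uniq unfolding r_def by blast
qed


lemma extend_step:
  assumes po: "partial_order_on A Q" and a: "a \<in> A" and b: "b \<in> A" and nab: "(a,b) \<notin> Q" and nba: "(b,a) \<notin> Q"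
  defines "Q' \<equiv> Q \<union> {(x,y). (x,a) \<in> Q \<and> (b,y) \<in> Q}"
  shows "partial_order_on A Q'" and "Q \<subseteq> Q'" and "(a,b) \<in> Q'"
    and "\<And>i j. pcovers Q' i j \<Longrightarrow> pcovers Q i j \<or> (i = a \<and> j = b)"
proof -
  have tr: "trans Q" and anti: "antisym Q" and rf: "refl_on A Q"
    using po unfolding partial_order_on_def preorder_on_def by auto
  have QA: "Q \<subseteq> A \<times> A" using po unfolding partial_order_on_def preorder_on_def by auto
  have rfl: "\<And>x. x \<in> A \<Longrightarrow> (x,x) \<in> Q" using rf unfolding refl_on_def by auto
  have T: "\<And>x y z. (x,y) \<in> Q \<Longrightarrow> (y,z) \<in> Q \<Longrightarrow> (x,z) \<in> Q" using tr by (auto dest: transD)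
  show "Q \<subseteq> Q'" unfolding Q'_def by auto
  show "(a,b) \<in> Q'" unfolding Q'_def using rfl a b by auto
  show "partial_order_on A Q'"
    unfolding partial_order_on_def preorder_on_def
  proof (intro conjI)
    show "Q' \<subseteq> A \<times> A" unfolding Q'_def using QA by auto
    show "refl_on A Q'" unfolding refl_on_def Q'_def using QA rfl by auto
    show "trans Q'" unfolding trans_def Q'_def using T nba by blast
    show "antisym Q'" unfolding antisym_def Q'_def using T nba anti by (blast dest: antisymD)
  qed
  fix i j assume c: "pcovers Q' i j"
  have ij: "(i,j) \<in> Q'" "i \<noteq> j" using c unfolding pcovers_def pless_def by auto
  show "pcovers Q i j \<or> (i = a \<and> j = b)"
  proof (cases "(i,j) \<in> Q")
    case True
    then have "pcovers Q i j" using c ij \<open>Q \<subseteq> Q'\<close> unfolding pcovers_def pless_def by blast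
    then show ?thesis by blast
  next
    case False
    then have ia: "(i,a) \<in> Q" and bj: "(b,j) \<in> Q" using ij unfolding Q'_def by auto
    have "i = a"
    proof (rule ccontr)
      assume "i \<noteq> a"
      moreover have "a \<noteq> j" using False ia by auto
      moreover have "(a,j) \<in> Q'" unfolding Q'_def using bj rfl a by auto
      ultimately have "pless Q' i a" "pless Q' a j" using ia \<open>Q \<subseteq> Q'\<close> unfolding pless_def by auto
      then show False using c unfolding pcovers_def by blast
    qed
    moreover have "j = b"
    proof (rule ccontr)
      assume "j \<noteq> b"
      moreover have "a \<noteq> b" using nab rfl a by auto
      ultimately have "pless Q' a b" "pless Q' b j" using bj \<open>Q \<subseteq> Q'\<close> \<open>(a,b) \<in> Q'\<close> unfolding pless_def by auto
      then show False using c \<open>i = a\<close> unfolding pcovers_def by blast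
    qed
    ultimately show ?thesis by blast
  qed
qed

theorem mainTheorem10:
  fixes n k :: nat and E P :: "(nat \<times> nat) set"
  assumes "simple_graph n E"
    and "k \<ge> 1"
    and "H_poset n (Hyp n E k) P"
    and "\<not> H_poset n (Hyp n E (k + 1)) P"
  shows "\<exists>P'. H_poset n (Hyp n E (k + 1)) P' \<and>
           (\<forall>i\<in>{1..n}. \<forall>j\<in>{1..n}. pless P i j \<longrightarrow> pless P' i j)"
proof -
  let ?A = "{1..n}"
  let ?HH = "Hyp n E (k + 1)"
  define F where "F = {Q. partial_order_on ?A Q \<and> P \<subseteq> Q \<and> (\<forall>i j. pcovers Q i j \<longrightarrow> (\<exists>H\<in>?HH. {i, j} \<subseteq> H))}"
  have sub: "Hyp n E k \<subseteq> ?HH" unfolding Hyp_def by auto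
  have PF: "P \<in> F" using assms(3) sub unfolding F_def H_poset_def by blast
  have "F \<subseteq> Pow (?A \<times> ?A)" unfolding F_def partial_order_on_def preorder_on_def refl_on_def by auto
  then have finF: "finite F" by (rule finite_subset) simp
  obtain Q where QF: "Q \<in> F" and Qmax: "\<And>Q'. Q' \<in> F \<Longrightarrow> Q \<subseteq> Q' \<Longrightarrow> Q' = Q"
    using finite_has_maximal[OF finF] PF by blast
  have po: "partial_order_on ?A Q" and PQ: "P \<subseteq> Q"
    and cov: "\<forall>i j. pcovers Q i j \<longrightarrow> (\<exists>H\<in>?HH. {i, j} \<subseteq> H)" using QF unfolding F_def by auto
  have rt: "rooted_tree_on Q H" if H: "H \<in> ?HH" for H
  proof (rule ccontr)
    assume nrt: "\<not> rooted_tree_on Q H"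
    have HA: "H \<subseteq> ?A" and ne: "H \<noteq> {}" using H unfolding Hyp_def by auto
    have fin: "finite H" using HA finite_subset by blast
    obtain a b where ab: "a \<in> H" "b \<in> H" "(a,b) \<notin> Q" "(b,a) \<notin> Q"
      using chain_rooted[OF po HA fin ne] nrt by blast
    define Q' where "Q' = Q \<union> {(x,y). (x,a) \<in> Q \<and> (b,y) \<in> Q}"
    have aA: "a \<in> ?A" and bA: "b \<in> ?A" using ab HA by auto
    note es = extend_step[OF po aA bA ab(3) ab(4), folded Q'_def]
    have "Q' \<in> F" unfolding F_def
    proof (intro CollectI conjI allI impI)
      show "partial_order_on ?A Q'" by (rule es(1))
      show "P \<subseteq> Q'" using PQ es(2) by blast
      fix i j assume "pcovers Q' i j"
      then have "pcovers Q i j \<or> (i = a \<and> j = b)" by (rule es(4))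
      then show "\<exists>H\<in>?HH. {i, j} \<subseteq> H" using cov H ab by blast
    qed
    then have "Q' = Q" using Qmax es(2) by blast
    then show False using es(3) ab by blast
  qed
  have "H_poset n ?HH Q" unfolding H_poset_def using po rt cov by blast
  moreover have "\<forall>i\<in>?A. \<forall>j\<in>?A. pless P i j \<longrightarrow> pless Q i j" using PQ unfolding pless_def by blast
  ultimately show ?thesis by blast
qed

end
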